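(* Let $1\le i<s\le u$ and let $\mathcal H$ be an $s$-graph with $\Delta_i(\mathcal H)\le\binom{x-i}{s-i}$ for some real $x\ge s$. If $x<u$ then $\mathcal H$ has no $u$-cliques. Otherwise, the $u$-graph $\mathcal U=\mathcal K^u(\mathcal H)$ (whose edges are the $u$-cliques of $\mathcal H$) satisfies $\Delta_i(\mathcal U)\le\binom{x-i}{u-i}$.
   Context: An $s$-graph is a family of $s$-subsets (edges) of a vertex set $V$. For $|I|=i$, $d_{\mathcal H}(I)$ is the number of edges containing $I$ and $\Delta_i(\mathcal H)=\max_{|I|=i}d_{\mathcal H}(I)$. For $u\ge s$, a $u$-clique of $\mathcal H$ is a $u$-set all of whose $s$-subsets are edges; $\mathcal K^u(\mathcal H)$ is the set of $u$-cliques. For real $x$, $\binom{x}{k}=x(x-1)\cdots(x-k+1)/k!$. *)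

theory Defs
  imports Complex_Main
begin

definition is_sgraph :: "'a set \<Rightarrow> nat \<Rightarrow> 'a set set \<Rightarrow> bool" where
  "is_sgraph V s H \<longleftrightarrow> finite V \<and> (\<forall>e\<in>H. e \<subseteq> V \<and> card e = s)"

definition hdeg :: "'a set set \<Rightarrow> 'a set \<Rightarrow> nat" where
  "hdeg H I = card {e\<in>H. I \<subseteq> e}"

definition maxdeg :: "'a set \<Rightarrow> 'a set set \<Rightarrow> nat \<Rightarrow> nat" where
  "maxdeg V H i = Max ({hdeg H I | I. I \<subseteq> V \<and> card I = i} \<union> {0})"

definition cliques :: "'a set \<Rightarrow> nat \<Rightarrow> 'a set set \<Rightarrow> nat \<Rightarrow> 'a set set" where
  "cliques V s H u = {U. U \<subseteq> V \<and> card U = u \<and> (\<forall>S. S \<subseteq> U \<and> card S = s \<longrightarrow> S \<in> H)}"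

end

theory Submission
  imports Defs
begin


lemma g_nonneg: fixes a :: real assumes "real k - 1 \<le> a" shows "0 \<le> a gchoose k"
  unfolding gbinomial_prod_rev using assms
  by (force intro!: divide_nonneg_pos prod_nonneg)

lemma g_mono: fixes a b :: real assumes "real k - 1 \<le> a" "a \<le> b" shows "a gchoose k \<le> b gchoose k"
  unfolding gbinomial_prod_rev using assms
  by (force intro!: divide_right_mono prod_mono)

lemma g_rec: fixes a :: real shows "a gchoose (Suc k) = (a gchoose k) * (a - real k) / (real k + 1)"
proof -
  have "a * (a gchoose k) = real k * (a gchoose k) + real (Suc k) * (a gchoose (Suc k))"
    by (rule gbinomial_mult_1)
  then show ?thesis by (simp add: field_simps)
qed

lemma g_pascal: fixes y :: real shows "y gchoose (Suc k) = ((y - 1) gchoose k) + ((y - 1) gchoose (Suc k))"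
  using gbinomial_Suc_Suc[of "y - 1" k] by simp

lemma g_kk: "(real k) gchoose k = 1"
  by (simp flip: binomial_gbinomial)

lemma g_sk: "(real (Suc k)) gchoose k = real k + 1"
proof -
  have "(real (Suc k)) gchoose k = real (Suc k choose k)" by (simp only: binomial_gbinomial)
  also have "\<dots> = real k + 1" by simp
  finally show ?thesis .
qed

lemma g_2: fixes a :: real shows "a gchoose 2 = a * (a - 1) / 2"
  using g_rec[of a 1] by (simp add: numeral_2_eq_2)

definition Cl :: "nat \<Rightarrow> nat \<Rightarrow> 'a set set \<Rightarrow> 'a set set" where
  "Cl k m L = {K. card K = m \<and> (\<forall>S. S \<subseteq> K \<and> card S = k \<longrightarrow> S \<in> L)}"

lemma Cl_subset_Union:
  assumes "1 \<le> k" "k \<le> m" shows "Cl k m L \<subseteq> Pow (\<Union>L)"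
proof
  fix K assume K: "K \<in> Cl k m L"
  then have cK: "card K = m" and P: "\<And>S. S \<subseteq> K \<Longrightarrow> card S = k \<Longrightarrow> S \<in> L"
    by (auto simp: Cl_def)
  have "card K \<noteq> 0" using cK assms by simp
  then have fK: "finite K" by (meson card.infinite)
  show "K \<in> Pow (\<Union>L)"
  proof (rule PowI, rule subsetI)
    fix a assume a: "a \<in> K"
    obtain S where "{a} \<subseteq> S" "S \<subseteq> K" "card S = k"
      using exists_subset_between[of "{a}" k K] assms cK fK a by auto
    then show "a \<in> \<Union>L" using P by blast
  qed
qed

lemma Cl_finite:
  assumes "1 \<le> k" "k \<le> m" "finite L" "\<forall>e\<in>L. finite e" shows "finite (Cl k m L)"
  using Cl_subset_Union[OF assms(1,2)] assms(3,4) by (meson Finite_Set.finite_Union finite_Pow_iff finite_subset)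

lemma Cl_empty:
  assumes "1 \<le> k" "k \<le> m" shows "Cl k m {} = {}"
proof -
  have "K \<notin> Cl k m {}" for K
  proof
    assume "K \<in> Cl k m {}"
    then have cK: "card K = m" and P: "\<And>S. S \<subseteq> K \<Longrightarrow> card S = k \<Longrightarrow> S \<in> {}"
      by (auto simp: Cl_def)
    have "k \<le> card K" using cK assms by simp
    then obtain S where "S \<subseteq> K" "card S = k" by (rule obtain_subset_with_card_n)
    then show False using P by blast
  qed
  then show ?thesis by blast
qed

lemma Cl_same:
  assumes "1 \<le> k" "\<forall>e\<in>L. card e = k" shows "Cl k k L = L"
proof
  show "Cl k k L \<subseteq> L" by (auto simp: Cl_def)
  show "L \<subseteq> Cl k k L"
  proof
    fix e assume e: "e \<in> L"
    then have ce: "card e = k" using assms by auto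
    then have "card e \<noteq> 0" using assms by simp
    then have fe: "finite e" by (meson card.infinite)
    have "S \<in> L" if "S \<subseteq> e" "card S = k" for S
    proof -
      have "S = e" using card_subset_eq[OF fe that(1)] that(2) ce by simp
      then show ?thesis using e by simp
    qed
    then have "e \<in> {K. card K = k \<and> (\<forall>S. S \<subseteq> K \<and> card S = k \<longrightarrow> S \<in> L)}"
      using ce by blast
    then show "e \<in> Cl k k L" by (simp only: Cl_def)
  qed
qed

lemma Cl_Suc:
  assumes "1 \<le> k" "k \<le> m" shows "Cl k (Suc m) L = Cl m (Suc m) (Cl k m L)"
proof
  show "Cl k (Suc m) L \<subseteq> Cl m (Suc m) (Cl k m L)"
  proof
    fix K assume "K \<in> Cl k (Suc m) L"
    then have cK: "card K = Suc m" and P: "\<And>S. S \<subseteq> K \<Longrightarrow> card S = k \<Longrightarrow> S \<in> L"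
      by (auto simp: Cl_def)
    have "T \<in> Cl k m L" if "T \<subseteq> K" "card T = m" for T
    proof -
      have "S \<in> L" if "S \<subseteq> T" "card S = k" for S
        using P[of S] that \<open>T \<subseteq> K\<close> by blast
      then show ?thesis using that by (simp add: Cl_def)
    qed
    then have "K \<in> {K. card K = Suc m \<and> (\<forall>T. T \<subseteq> K \<and> card T = m \<longrightarrow> T \<in> Cl k m L)}"
      using cK by blast
    then show "K \<in> Cl m (Suc m) (Cl k m L)"
      by (simp only: Cl_def[of m "Suc m" "Cl k m L"])
  qed
  show "Cl m (Suc m) (Cl k m L) \<subseteq> Cl k (Suc m) L"
  proof
    fix K assume "K \<in> Cl m (Suc m) (Cl k m L)"
    then have cK: "card K = Suc m" and P: "\<And>T. T \<subseteq> K \<Longrightarrow> card T = m \<Longrightarrow> T \<in> Cl k m L"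
      by (auto simp: Cl_def)
    have "card K \<noteq> 0" using cK by simp
    then have fK: "finite K" by (meson card.infinite)
    have "S \<in> L" if "S \<subseteq> K" "card S = k" for S
    proof -
      have "card S \<le> m" "m \<le> card K" using that assms cK by auto
      then have "\<exists>B. S \<subseteq> B \<and> B \<subseteq> K \<and> card B = m"
        using exists_subset_between[of S m K] that(1) fK by simp
      then obtain T where T: "S \<subseteq> T" "T \<subseteq> K" "card T = m" by blast
      have "T \<in> Cl k m L" using P T by simp
      then have "\<forall>S. S \<subseteq> T \<and> card S = k \<longrightarrow> S \<in> L" unfolding Cl_def by simp
      then show ?thesis using T that by simp
    qed
    then have "K \<in> {K. card K = Suc m \<and> (\<forall>S. S \<subseteq> K \<and> card S = k \<longrightarrow> S \<in> L)}"
      using cK by blast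
    then show "K \<in> Cl k (Suc m) L" by (simp only: Cl_def)
  qed
qed

lemma double_count:
  assumes "finite W" "finite F" "\<forall>K\<in>F. K \<subseteq> W"
  shows "(\<Sum>v\<in>W. card {K\<in>F. v \<in> K}) = (\<Sum>K\<in>F. card K)"
proof -
  have "(\<Sum>v\<in>W. card {K\<in>F. v \<in> K}) = (\<Sum>v\<in>W. \<Sum>K\<in>F. if v \<in> K then 1 else 0)"
  proof (rule sum.cong[OF refl])
    fix v assume "v \<in> W"
    show "card {K\<in>F. v \<in> K} = (\<Sum>K\<in>F. if v \<in> K then 1 else 0)"
      unfolding card_eq_sum by (rule sum.inter_filter[OF assms(2)])
  qed
  also have "\<dots> = (\<Sum>K\<in>F. \<Sum>v\<in>W. if v \<in> K then 1 else 0)" by (rule sum.swap)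
  also have "\<dots> = (\<Sum>K\<in>F. card K)"
  proof (rule sum.cong[OF refl])
    fix K assume "K \<in> F"
    then have e: "{v\<in>W. v \<in> K} = K" using assms by auto
    have "(\<Sum>v\<in>W. if v \<in> K then 1 else 0) = card {v\<in>W. v \<in> K}"
      unfolding card_eq_sum by (rule sum.inter_filter[OF assms(1), symmetric])
    then show "(\<Sum>v\<in>W. if v \<in> K then 1 else 0) = card K" using e by simp
  qed
  finally show ?thesis .
qed

lemma KK1:
  assumes "finite G" "\<forall>e\<in>G. card e = 1" "real (card G) \<le> y"
  shows "real (card (Cl 1 (Suc 1) G)) \<le> real (card G) * (y - real 1) / (real 1 + 1)"
proof -
  define W where "W = \<Union>G"
  have GW: "G = (\<lambda>a. {a}) ` W"
  proof
    show "G \<subseteq> (\<lambda>a. {a}) ` W"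
    proof
      fix e assume e: "e \<in> G"
      have "card e = 1" using assms(2) e by blast
      then obtain a where "e = {a}" by (rule card_1_singletonE)
      then show "e \<in> (\<lambda>a. {a}) ` W" using e W_def by blast
    qed
    show "(\<lambda>a. {a}) ` W \<subseteq> G"
    proof
      fix e assume "e \<in> (\<lambda>a. {a}) ` W"
      then obtain a f where "e = {a}" "a \<in> f" "f \<in> G" using W_def by blast
      moreover have "card f = 1" using assms(2) \<open>f \<in> G\<close> by blast
      then obtain b where "f = {b}" by (rule card_1_singletonE)
      ultimately show "e \<in> G" by simp
    qed
  qed
  have cW: "card G = card W" unfolding GW by (rule card_image) (simp add: inj_on_def)
  have fW: "finite W" unfolding W_def using assms(1,2)
    by (intro finite_Union) (auto intro: card_ge_0_finite)
  have sub2: "Cl 1 (Suc 1) G \<subseteq> {B. B \<subseteq> W \<and> card B = 2}"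
  proof
    fix K assume K: "K \<in> Cl 1 (Suc 1) G"
    have "K \<in> Pow (\<Union>G)" using Cl_subset_Union[of 1 "Suc 1" G] K by auto
    then have "K \<subseteq> W" unfolding W_def by simp
    moreover have "card K = 2" using K unfolding Cl_def by simp
    ultimately show "K \<in> {B. B \<subseteq> W \<and> card B = 2}" by simp
  qed
  then have "card (Cl 1 (Suc 1) G) \<le> card W choose 2"
    using card_mono[OF _ sub2] fW n_subsets[OF fW, of 2] by (simp add: finite_subset)
  then have "real (card (Cl 1 (Suc 1) G)) \<le> real (card W choose 2)" by linarith
  also have "\<dots> = real (card W) * (real (card W) - 1) / 2"
    by (simp only: binomial_gbinomial g_2)
  also have "\<dots> \<le> real (card W) * (y - 1) / 2"
    using assms(3) cW by (intro divide_right_mono mult_left_mono) auto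
  finally show ?thesis using cW by simp
qed


lemma KK_step:
  assumes k1: "1 \<le> k"
  and IH: "\<And>(G'::'a set set) y. finite G' \<Longrightarrow> \<forall>e\<in>G'. card e = k \<Longrightarrow> real k \<le> y \<Longrightarrow> real (card G') \<le> y gchoose k
     \<Longrightarrow> real (card (Cl k (Suc k) G')) \<le> real (card G') * (y - real k) / (real k + 1)"
  shows "finite (G::'a set set) \<Longrightarrow> \<forall>e\<in>G. card e = Suc k \<Longrightarrow> real (Suc k) \<le> y \<Longrightarrow> real (card G) \<le> y gchoose (Suc k)
     \<Longrightarrow> real (card (Cl (Suc k) (Suc (Suc k)) G)) \<le> real (card G) * (y - real (Suc k)) / (real (Suc k) + 1)"
proof (induction "card G" arbitrary: G y rule: less_induct)
  case less
  note IH2 = less.hyps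
  have fG: "finite G" and cG: "\<forall>e\<in>G. card e = Suc k" and yk: "real (Suc k) \<le> y"
    and bG: "real (card G) \<le> y gchoose (Suc k)" using less.prems by auto
  define W where "W = \<Union>G"
  define C where "C = Cl (Suc k) (Suc (Suc k)) G"
  have feG: "finite e" if "e \<in> G" for e
  proof -
    have "card e \<noteq> 0" using cG that by simp
    then show ?thesis by (meson card.infinite)
  qed
  have fW: "finite W" unfolding W_def using fG feG by blast
  have CW: "C \<subseteq> Pow W" unfolding C_def W_def by (rule Cl_subset_Union) auto
  have fC: "finite C" using CW fW by (meson finite_Pow_iff finite_subset)
  have cC: "card K = Suc (Suc k)" if "K \<in> C" for K using that unfolding C_def Cl_def by simp
  have fK: "finite K" if "K \<in> C" for K
  proof -
    have "card K \<noteq> 0" using cC that by simp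
    then show ?thesis by (meson card.infinite)
  qed
  have clq: "S \<in> G" if "K \<in> C" "S \<subseteq> K" "card S = Suc k" for K S
  proof -
    have "\<forall>S. S \<subseteq> K \<and> card S = Suc k \<longrightarrow> S \<in> G" using that(1) unfolding C_def Cl_def by simp
    then show ?thesis using that by blast
  qed
  have ynn: "0 \<le> y - real (Suc k)" using yk by simp
  show ?case
  proof (cases "\<exists>v\<in>W. real (card {e\<in>G. v\<in>e}) > (y-1) gchoose k")
    case True
    then obtain v where vW: "v \<in> W" and dv: "real (card {e\<in>G. v\<in>e}) > (y-1) gchoose k" by blast
    define Gb where "Gb = {e\<in>G. v \<notin> e}"
    define d where "d = card {e\<in>G. v\<in>e}"
    have fGb: "finite Gb" using fG unfolding Gb_def by simp
    have "G = {e\<in>G. v\<in>e} \<union> Gb" by (auto simp: Gb_def)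
    then have "card G = card ({e\<in>G. v\<in>e} \<union> Gb)" by simp
    also have "\<dots> = d + card Gb" unfolding d_def by (rule card_Un_disjoint) (auto simp: Gb_def fG)
    finally have cpart: "card G = d + card Gb" .
    have pas: "y gchoose (Suc k) = ((y - 1) gchoose k) + ((y - 1) gchoose (Suc k))" by (rule g_pascal)
    have bGb: "real (card Gb) < (y - 1) gchoose (Suc k)"
      using cpart bG pas dv unfolding d_def by simp
    have sub: "C \<subseteq> {K\<in>C. v\<in>K} \<union> Cl (Suc k) (Suc (Suc k)) Gb"
    proof
      fix K assume K: "K \<in> C"
      show "K \<in> {K\<in>C. v\<in>K} \<union> Cl (Suc k) (Suc (Suc k)) Gb"
      proof (cases "v \<in> K")
        case True then show ?thesis using K by simp
      next
        case False
        have "S \<in> Gb" if "S \<subseteq> K" "card S = Suc k" for S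
          using clq[OF K that] False that(1) unfolding Gb_def by blast
        then have "K \<in> {K. card K = Suc (Suc k) \<and> (\<forall>S. S \<subseteq> K \<and> card S = Suc k \<longrightarrow> S \<in> Gb)}"
          using cC[OF K] by blast
        then have "K \<in> Cl (Suc k) (Suc (Suc k)) Gb" by (simp only: Cl_def)
        then show ?thesis by simp
      qed
    qed
    have inj1: "card {K\<in>C. v\<in>K} \<le> card Gb"
    proof (rule card_inj_on_le[of "\<lambda>K. K - {v}"])
      show "inj_on (\<lambda>K. K - {v}) {K\<in>C. v\<in>K}"
        by (rule inj_onI) (metis (no_types, lifting) insert_Diff mem_Collect_eq)
      show "(\<lambda>K. K - {v}) ` {K\<in>C. v\<in>K} \<subseteq> Gb"
      proof
        fix T assume "T \<in> (\<lambda>K. K - {v}) ` {K\<in>C. v\<in>K}"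
        then obtain K where K: "K \<in> C" "v \<in> K" and T: "T = K - {v}" by blast
        have "card T = Suc k" using T K cC[OF K(1)] fK[OF K(1)] by simp
        then have "T \<in> G" using clq[OF K(1)] T by blast
        then show "T \<in> Gb" using T unfolding Gb_def by simp
      qed
      show "finite Gb" by (rule fGb)
    qed
    have fGbe: "\<forall>e\<in>Gb. finite e" using feG unfolding Gb_def by simp
    have fClGb: "finite (Cl (Suc k) (Suc (Suc k)) Gb)" by (rule Cl_finite) (use fGb fGbe in auto)
    have fCv: "finite {K\<in>C. v\<in>K}" using fC by simp
    have "card C \<le> card ({K\<in>C. v\<in>K} \<union> Cl (Suc k) (Suc (Suc k)) Gb)"
      by (rule card_mono[OF _ sub]) (use fCv fClGb in simp)
    also have "\<dots> \<le> card {K\<in>C. v\<in>K} + card (Cl (Suc k) (Suc (Suc k)) Gb)" by (rule card_Un_le)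
    finally have cardC: "card C \<le> card {K\<in>C. v\<in>K} + card (Cl (Suc k) (Suc (Suc k)) Gb)" .
    show ?thesis
    proof (cases "real (Suc (Suc k)) \<le> y")
      case True
      have g0: "0 \<le> (y - 1) gchoose k" by (rule g_nonneg) (use True in simp)
      then have "0 < d" using dv unfolding d_def by simp
      then have lt: "card Gb < card G" using cpart by simp
      have IHb: "real (card (Cl (Suc k) (Suc (Suc k)) Gb)) \<le> real (card Gb) * ((y - 1) - real (Suc k)) / (real (Suc k) + 1)"
      proof (rule IH2[OF lt fGb])
        show "\<forall>e\<in>Gb. card e = Suc k" using cG unfolding Gb_def by simp
        show "real (Suc k) \<le> y - 1" using True by simp
        show "real (card Gb) \<le> (y - 1) gchoose (Suc k)" using bGb by simp
      qed
      define a where "a = real (card Gb)"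
      define t where "t = y - real (Suc k)"
      define g where "g = (y - 1) gchoose k"
      have rec: "(y - 1) gchoose (Suc k) = g * t / (real k + 1)"
        unfolding g_def t_def by (simp add: g_rec algebra_simps)
      have h1: "a * (real k + 1) \<le> g * t"
        using bGb rec unfolding a_def by (simp add: field_simps)
      have h2: "g * t \<le> real d * t" using dv ynn unfolding g_def t_def d_def
        by (intro mult_right_mono) auto
      have key: "a * (real k + 1) \<le> real d * t" using h1 h2 by linarith
      have "real (card C) \<le> a + a * (t - 1) / (real k + 2)"
        using cardC inj1 IHb unfolding a_def t_def by (simp add: algebra_simps)
      also have "\<dots> = (a * (real k + 1) + a * t) / (real k + 2)" by (simp add: field_simps)
      also have "\<dots> \<le> (real d * t + a * t) / (real k + 2)"
        using key by (intro divide_right_mono) auto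
      also have "\<dots> = real (card G) * t / (real k + 2)" using cpart unfolding a_def
        by (simp add: algebra_simps)
      finally show ?thesis unfolding C_def t_def by (simp add: algebra_simps)
    next
      case False
      have "(y - 1) gchoose (Suc k) \<le> real (Suc k) gchoose (Suc k)"
        by (rule g_mono) (use False yk in auto)
      then have "real (card Gb) < 1" using bGb g_kk[of "Suc k"] by linarith
      then have "Gb = {}" using fGb by simp
      then have e0: "Cl (Suc k) (Suc (Suc k)) Gb = {}" using Cl_empty[of "Suc k" "Suc (Suc k)"] by simp
      have "card C = 0" using cardC inj1 e0 \<open>Gb = {}\<close> by simp
      then show ?thesis unfolding C_def using ynn by simp
    qed
  next
    case False
    then have dle: "real (card {e\<in>G. v\<in>e}) \<le> (y-1) gchoose k" if "v \<in> W" for v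
      using that by (simp add: not_less)
    define t where "t = y - real (Suc k)"
    have bv: "real (card {K\<in>C. v\<in>K}) \<le> real (card {e\<in>G. v\<in>e}) * t / (real k + 1)"
      if vW: "v \<in> W" for v
    proof -
      define Gv where "Gv = (\<lambda>e. e - {v}) ` {e\<in>G. v\<in>e}"
      have fGv: "finite Gv" unfolding Gv_def using fG by simp
      have cGv: "card Gv = card {e\<in>G. v\<in>e}" unfolding Gv_def
        by (rule card_image) (rule inj_onI, metis (no_types, lifting) insert_Diff mem_Collect_eq)
      have eGv: "\<forall>e\<in>Gv. card e = k"
      proof
        fix e assume "e \<in> Gv"
        then obtain f where "f \<in> G" "v \<in> f" "e = f - {v}" unfolding Gv_def by blast
        then show "card e = k" using cG feG by simp
      qed
      have feGv: "\<forall>e\<in>Gv. finite e"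
      proof
        fix e assume "e \<in> Gv"
        then obtain f where "f \<in> G" "e = f - {v}" unfolding Gv_def by blast
        then show "finite e" using feG by simp
      qed
      have IHv: "real (card (Cl k (Suc k) Gv)) \<le> real (card Gv) * ((y - 1) - real k) / (real k + 1)"
        by (rule IH) (use fGv eGv yk dle[OF vW] cGv in auto)
      have fClv: "finite (Cl k (Suc k) Gv)" by (rule Cl_finite) (use k1 fGv feGv in auto)
      have "card {K\<in>C. v\<in>K} \<le> card (Cl k (Suc k) Gv)"
      proof (rule card_inj_on_le[of "\<lambda>K. K - {v}"])
        show "inj_on (\<lambda>K. K - {v}) {K\<in>C. v\<in>K}"
          by (rule inj_onI) (metis (no_types, lifting) insert_Diff mem_Collect_eq)
        show "(\<lambda>K. K - {v}) ` {K\<in>C. v\<in>K} \<subseteq> Cl k (Suc k) Gv"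
        proof
          fix T assume "T \<in> (\<lambda>K. K - {v}) ` {K\<in>C. v\<in>K}"
          then obtain K where K: "K \<in> C" "v \<in> K" and T: "T = K - {v}" by blast
          have cT: "card T = Suc k" using T K cC[OF K(1)] fK[OF K(1)] by simp
          have "S \<in> Gv" if "S \<subseteq> T" "card S = k" for S
          proof -
            have vS: "v \<notin> S" using that T by blast
            have fS: "finite S" using that(1) T fK[OF K(1)] by (meson finite_Diff finite_subset)
            have sub: "insert v S \<subseteq> K" using that(1) T K(2) by blast
            have "card (insert v S) = Suc k" using vS fS that(2) by simp
            then have "insert v S \<in> G" using clq[OF K(1) sub] by simp
            then have m: "insert v S \<in> {e\<in>G. v\<in>e}" by simp
            have "S = insert v S - {v}" using vS by simp
            then show ?thesis unfolding Gv_def using m by (rule image_eqI)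
          qed
          then have "T \<in> {K. card K = Suc k \<and> (\<forall>S. S \<subseteq> K \<and> card S = k \<longrightarrow> S \<in> Gv)}"
            using cT by blast
          then show "T \<in> Cl k (Suc k) Gv" by (simp only: Cl_def)
        qed
        show "finite (Cl k (Suc k) Gv)" by (rule fClv)
      qed
      then have "real (card {K\<in>C. v\<in>K}) \<le> real (card (Cl k (Suc k) Gv))" by simp
      also have "\<dots> \<le> real (card Gv) * ((y - 1) - real k) / (real k + 1)" by (rule IHv)
      finally show ?thesis unfolding t_def using cGv by (simp add: algebra_simps)
    qed
    have dc1: "(\<Sum>v\<in>W. card {K\<in>C. v \<in> K}) = (\<Sum>K\<in>C. card K)"
      by (rule double_count) (use fW fC CW in auto)
    also have "\<dots> = (\<Sum>K\<in>C. Suc (Suc k))" using cC by simp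
    finally have dc1': "(\<Sum>v\<in>W. card {K\<in>C. v \<in> K}) = card C * Suc (Suc k)" by simp
    have dc2: "(\<Sum>v\<in>W. card {e\<in>G. v \<in> e}) = (\<Sum>e\<in>G. card e)"
      by (rule double_count) (use fW fG in \<open>auto simp: W_def\<close>)
    also have "\<dots> = (\<Sum>e\<in>G. Suc k)" using cG by simp
    finally have dc2': "(\<Sum>v\<in>W. card {e\<in>G. v \<in> e}) = card G * Suc k" by simp
    have "real (card C) * (real k + 2) = real (\<Sum>v\<in>W. card {K\<in>C. v \<in> K})"
      unfolding dc1' by (simp add: algebra_simps)
    also have "\<dots> = (\<Sum>v\<in>W. real (card {K\<in>C. v \<in> K}))" by simp
    also have "\<dots> \<le> (\<Sum>v\<in>W. real (card {e\<in>G. v\<in>e}) * t / (real k + 1))"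
      by (rule sum_mono) (rule bv)
    also have "\<dots> = (\<Sum>v\<in>W. real (card {e\<in>G. v\<in>e})) * t / (real k + 1)"
      by (simp add: sum_divide_distrib sum_distrib_right)
    also have "\<dots> = real (card G) * t"
    proof -
      have "(\<Sum>v\<in>W. real (card {e\<in>G. v\<in>e})) = real (card G) * (real k + 1)"
        using dc2' by (simp add: algebra_simps flip: of_nat_sum)
      then show ?thesis by simp
    qed
    finally have "real (card C) * (real k + 2) \<le> real (card G) * t" .
    then show ?thesis unfolding C_def t_def by (simp add: field_simps)
  qed
qed


lemma KK:
  fixes G :: "'a set set"
  assumes "1 \<le> k"
  shows "finite G \<Longrightarrow> \<forall>e\<in>G. card e = k \<Longrightarrow> real k \<le> y \<Longrightarrow> real (card G) \<le> y gchoose k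
     \<Longrightarrow> real (card (Cl k (Suc k) G)) \<le> real (card G) * (y - real k) / (real k + 1)"
  using assms
proof (induction k arbitrary: G y)
  case 0 then show ?case by simp
next
  case (Suc k)
  show ?case
  proof (cases "k = 0")
    case True
    then show ?thesis using KK1[of G y] Suc.prems by simp
  next
    case False
    have IH': "\<And>(G'::'a set set) y. finite G' \<Longrightarrow> \<forall>e\<in>G'. card e = k \<Longrightarrow> real k \<le> y \<Longrightarrow> real (card G') \<le> y gchoose k
     \<Longrightarrow> real (card (Cl k (Suc k) G')) \<le> real (card G') * (y - real k) / (real k + 1)"
      using Suc.IH False by simp
    show ?thesis by (rule KK_step[OF _ IH']) (use Suc.prems False in auto)
  qed
qed

lemma iter:
  fixes L :: "'a set set"
  assumes k1: "1 \<le> k" and fL: "finite L" and cL: "\<forall>e\<in>L. card e = k" and yk: "real k \<le> y"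
    and bL: "real (card L) \<le> y gchoose k" and km: "k \<le> m"
  shows "(real m \<le> y \<longrightarrow> real (card (Cl k m L)) \<le> y gchoose m) \<and> (y < real m \<longrightarrow> Cl k m L = {})"
  using km
proof (induction m rule: dec_induct)
  case base
  show ?case using Cl_same[OF k1 cL] bL yk by simp
next
  case (step n)
  have kn: "k \<le> n" by (rule step.hyps(1))
  have n1: "1 \<le> n" using k1 kn by simp
  have eq: "Cl k (Suc n) L = Cl n (Suc n) (Cl k n L)" by (rule Cl_Suc[OF k1 kn])
  define D where "D = Cl k n L"
  have feL: "\<forall>e\<in>L. finite e"
  proof
    fix e assume "e \<in> L"
    then have "card e \<noteq> 0" using cL k1 by simp
    then show "finite e" by (meson card.infinite)
  qed
  have fD: "finite D" unfolding D_def by (rule Cl_finite[OF k1 kn fL feL])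
  have cD: "\<forall>e\<in>D. card e = n" unfolding D_def Cl_def by simp
  have feD: "\<forall>e\<in>D. finite e"
  proof
    fix e assume "e \<in> D"
    then have "card e \<noteq> 0" using cD n1 by simp
    then show "finite e" by (meson card.infinite)
  qed
  have fCl: "finite (Cl n (Suc n) D)" by (rule Cl_finite[OF n1 _ fD feD]) simp
  have P1: "real (card (Cl k (Suc n) L)) \<le> y gchoose (Suc n)" if ys: "real (Suc n) \<le> y"
  proof -
    have yn: "real n \<le> y" using ys by simp
    have bD: "real (card D) \<le> y gchoose n" using step.IH yn unfolding D_def by simp
    have "real (card (Cl n (Suc n) D)) \<le> real (card D) * (y - real n) / (real n + 1)"
      by (rule KK[OF n1 fD cD yn bD])
    also have "\<dots> \<le> (y gchoose n) * (y - real n) / (real n + 1)"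
      using bD yn by (intro divide_right_mono mult_right_mono) auto
    also have "\<dots> = y gchoose (Suc n)" by (simp add: g_rec)
    finally show ?thesis unfolding eq D_def .
  qed
  have P2: "Cl k (Suc n) L = {}" if ys: "y < real (Suc n)"
  proof (cases "y < real n")
    case True
    then have "D = {}" using step.IH unfolding D_def by simp
    then show ?thesis unfolding eq D_def[symmetric] using Cl_empty[of n "Suc n"] n1 by simp
  next
    case False
    then have yn: "real n \<le> y" by simp
    have bD: "real (card D) \<le> y gchoose n" using step.IH yn unfolding D_def by simp
    have "y gchoose n \<le> real (Suc n) gchoose n" by (rule g_mono) (use yn ys in auto)
    then have bD2: "real (card D) \<le> real n + 1" using bD g_sk[of n] by linarith
    have "real (card (Cl n (Suc n) D)) \<le> real (card D) * (y - real n) / (real n + 1)"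
      by (rule KK[OF n1 fD cD yn bD])
    also have "\<dots> \<le> (real n + 1) * (y - real n) / (real n + 1)"
      using bD2 yn by (intro divide_right_mono mult_right_mono) auto
    also have "\<dots> = y - real n" by simp
    finally have "real (card (Cl n (Suc n) D)) < 1" using ys by simp
    then have "Cl n (Suc n) D = {}" using fCl by simp
    then show ?thesis unfolding eq D_def .
  qed
  show ?case using P1 P2 by blast
qed


theorem mainTheorem7:
  fixes V :: "'a set" and H :: "'a set set" and i s u :: nat and x :: real
  assumes "1 \<le> i" and "i < s" and "s \<le> u"
    and "is_sgraph V s H"
    and "real (maxdeg V H i) \<le> (x - real i) gchoose (s - i)"
    and "x \<ge> real s"
  shows "(x < real u \<longrightarrow> cliques V s H u = {})
    \<and> (x \<ge> real u \<longrightarrow> real (maxdeg V (cliques V s H u) i) \<le> (x - real i) gchoose (u - i))"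
proof -
  have fV: "finite V" and eH: "\<forall>e\<in>H. e \<subseteq> V \<and> card e = s"
    using assms(4) unfolding is_sgraph_def by auto
  define y where "y = x - real i"
  define k where "k = s - i"
  have k1: "1 \<le> k" unfolding k_def using assms(2) by simp
  have yk: "real k \<le> y" unfolding k_def y_def using assms(2,6) by (simp add: of_nat_diff)
  have "H \<subseteq> Pow V" using eH by auto
  then have fH: "finite H" using fV by (meson finite_Pow_iff finite_subset)
  define LI where "LI I = (\<lambda>e. e - I) ` {e\<in>H. I \<subseteq> e}" for I
  have finI: "finite I" if "card I = i" for I :: "'a set"
  proof -
    have "card I \<noteq> 0" using that assms(1) by simp
    then show ?thesis by (meson card.infinite)
  qed
  have fA: "finite {hdeg G I |I. I \<subseteq> V \<and> card I = i}" for G :: "'a set set"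
  proof -
    have "finite {I. I \<subseteq> V \<and> card I = i}" using fV by simp
    then show ?thesis by (rule finite_image_set)
  qed
  have degH: "real (hdeg H I) \<le> y gchoose k" if I: "I \<subseteq> V" "card I = i" for I
  proof -
    have "hdeg H I \<in> {hdeg H I |I. I \<subseteq> V \<and> card I = i} \<union> {0}" using I by blast
    then have "hdeg H I \<le> maxdeg V H i" unfolding maxdeg_def
      by (rule Max_ge[rotated]) (use fA in simp)
    then show ?thesis using assms(5) unfolding y_def k_def by linarith
  qed
  have Lprops: "finite (LI I) \<and> (\<forall>e\<in>LI I. card e = k) \<and> real (card (LI I)) \<le> y gchoose k"
    if I: "I \<subseteq> V" "card I = i" for I
  proof (intro conjI)
    show "finite (LI I)" unfolding LI_def using fH by simp
    show "\<forall>e\<in>LI I. card e = k"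
    proof
      fix e assume "e \<in> LI I"
      then obtain f where f: "f \<in> H" "I \<subseteq> f" "e = f - I" unfolding LI_def by blast
      have cf: "card f = s" using eH f(1) by simp
      have "card (f - I) = card f - card I" by (rule card_Diff_subset[OF finI[OF I(2)] f(2)])
      then show "card e = k" using f(3) cf I(2) unfolding k_def by simp
    qed
    have "card (LI I) \<le> card {e\<in>H. I \<subseteq> e}" unfolding LI_def using fH by (simp add: card_image_le)
    then have "real (card (LI I)) \<le> real (hdeg H I)" unfolding hdeg_def by simp
    then show "real (card (LI I)) \<le> y gchoose k" using degH[OF I] by linarith
  qed
  have feLI: "\<forall>e\<in>LI I. finite e" for I
  proof
    fix e assume "e \<in> LI I"
    then obtain f where f: "f \<in> H" "e = f - I" unfolding LI_def by blast
    then show "finite e" using eH fV by (meson finite_Diff finite_subset)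
  qed
  have km: "k \<le> u - i" unfolding k_def using assms(3) by simp
  have keymap: "U - I \<in> Cl k (u - i) (LI I)"
    if U: "U \<in> cliques V s H u" and IU: "I \<subseteq> U" and cI: "card I = i" for U I
  proof -
    have UV: "U \<subseteq> V" and cU: "card U = u" and cl: "\<forall>S. S \<subseteq> U \<and> card S = s \<longrightarrow> S \<in> H"
      using U unfolding cliques_def by auto
    have fU: "finite U" using UV fV by (meson finite_subset)
    have fI: "finite I" by (rule finI[OF cI])
    have cUI: "card (U - I) = u - i" using cU cI IU fU by (simp add: card_Diff_subset fI)
    have "S \<in> LI I" if S: "S \<subseteq> U - I" "card S = k" for S
    proof -
      have fS: "finite S" using S(1) fU by (meson finite_Diff finite_subset)
      have dis: "S \<inter> I = {}" using S(1) by blast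
      have "card (S \<union> I) = card S + card I" by (rule card_Un_disjoint[OF fS fI dis])
      then have "card (S \<union> I) = s" using S(2) cI assms(2) unfolding k_def by simp
      moreover have "S \<union> I \<subseteq> U" using S(1) IU by blast
      ultimately have "S \<union> I \<in> H" using cl by blast
      then have m: "S \<union> I \<in> {e\<in>H. I \<subseteq> e}" by simp
      have "S = (S \<union> I) - I" using dis by blast
      then show ?thesis unfolding LI_def using m by (rule image_eqI)
    qed
    then have "U - I \<in> {K. card K = u - i \<and> (\<forall>S. S \<subseteq> K \<and> card S = k \<longrightarrow> S \<in> LI I)}"
      using cUI by blast
    then show ?thesis by (simp only: Cl_def)
  qed
  have IT: "(real (u - i) \<le> y \<longrightarrow> real (card (Cl k (u - i) (LI I))) \<le> y gchoose (u - i))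
      \<and> (y < real (u - i) \<longrightarrow> Cl k (u - i) (LI I) = {})" if I: "I \<subseteq> V" "card I = i" for I
    using Lprops[OF I] by (intro iter[OF k1 _ _ yk _ km]) auto
  have ui: "real (u - i) = real u - real i" using assms(2,3) by (simp add: of_nat_diff)
  show ?thesis
  proof (intro conjI impI)
    assume xu: "x < real u"
    show "cliques V s H u = {}"
    proof (rule ccontr)
      assume "cliques V s H u \<noteq> {}"
      then obtain U where U: "U \<in> cliques V s H u" by blast
      then have UV: "U \<subseteq> V" and cU: "card U = u" unfolding cliques_def by auto
      have "i \<le> card U" using cU assms(2,3) by simp
      then obtain I where IU: "I \<subseteq> U" and cI: "card I = i" by (rule obtain_subset_with_card_n)
      have "I \<subseteq> V" using IU UV by blast
      moreover have "y < real (u - i)" using xu ui unfolding y_def by simp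
      ultimately have "Cl k (u - i) (LI I) = {}" using IT[OF \<open>I \<subseteq> V\<close> cI] by blast
      then show False using keymap[OF U IU cI] by simp
    qed
  next
    assume ux: "real u \<le> x"
    have yu: "real (u - i) \<le> y" using ux ui unfolding y_def by simp
    define A where "A = {hdeg (cliques V s H u) I |I. I \<subseteq> V \<and> card I = i} \<union> {0}"
    have "Max A \<in> A" unfolding A_def by (rule Max_in) (use fA in auto)
    then consider "Max A = 0" | I where "I \<subseteq> V" "card I = i" "Max A = hdeg (cliques V s H u) I"
      unfolding A_def by auto
    then have "real (Max A) \<le> y gchoose (u - i)"
    proof cases
      case 1
      have "0 \<le> y gchoose (u - i)" by (rule g_nonneg) (use yu in simp)
      then show ?thesis using 1 by simp
    next
      case (2 I)
      have fClI: "finite (Cl k (u - i) (LI I))"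
        by (rule Cl_finite[OF k1 km]) (use Lprops[OF 2(1,2)] feLI in auto)
      have "card {U\<in>cliques V s H u. I \<subseteq> U} \<le> card (Cl k (u - i) (LI I))"
      proof (rule card_inj_on_le[of "\<lambda>U. U - I"])
        show "inj_on (\<lambda>U. U - I) {U\<in>cliques V s H u. I \<subseteq> U}"
        proof (rule inj_onI)
          fix U U' assume "U \<in> {U\<in>cliques V s H u. I \<subseteq> U}" "U' \<in> {U\<in>cliques V s H u. I \<subseteq> U}"
            "U - I = U' - I"
          then show "U = U'" by (metis Diff_partition mem_Collect_eq)
        qed
        show "(\<lambda>U. U - I) ` {U\<in>cliques V s H u. I \<subseteq> U} \<subseteq> Cl k (u - i) (LI I)"
        proof
          fix T assume "T \<in> (\<lambda>U. U - I) ` {U\<in>cliques V s H u. I \<subseteq> U}"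
          then obtain U where "U \<in> cliques V s H u" "I \<subseteq> U" "T = U - I" by blast
          then show "T \<in> Cl k (u - i) (LI I)" using keymap 2(2) by simp
        qed
        show "finite (Cl k (u - i) (LI I))" by (rule fClI)
      qed
      then have "real (hdeg (cliques V s H u) I) \<le> real (card (Cl k (u - i) (LI I)))"
        unfolding hdeg_def by simp
      also have "\<dots> \<le> y gchoose (u - i)" using IT[OF 2(1,2)] yu by blast
      finally show ?thesis using 2(3) by simp
    qed
    then show "real (maxdeg V (cliques V s H u) i) \<le> (x - real i) gchoose (u - i)"
      unfolding maxdeg_def A_def[symmetric] y_def by simp
  qed
qed

end
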